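(* Let $(X,\sigma_X)$, $(Y,\sigma_Y)$ be one-sided irreducible sofic shifts and $\pi:X\to Y$ a one-block factor map, and suppose $X$ has the specification property. Let $\mu\in M(X,\sigma_X)$ be the unique measure of maximal entropy of $(X,\sigma_X)$ and $\nu=\pi\mu$. Then $\mu$ is the unique relative equilibrium state for $0$ over $\nu$, i.e. $\mu$ is the unique $\bar\mu\in M(X,\sigma_X)$ with $\pi\bar\mu=\nu$ and $h_{\bar\mu}(\sigma_X)=\sup\{h_{\mu'}(\sigma_X):\mu'\in M(X,\sigma_X),\pi\mu'=\nu\}$.
   Context: Sofic shifts are one-sided subshifts (closed shift-invariant subsets of $\{1,\dots,k\}^{\mathbb N}$) that are images of shifts of finite type under factor maps; irreducible means for any allowable words $u,v$ there is $w$ with $uwv$ allowable. Specification: there is a fixed $p>0$ such that for all allowable $u,v$ some $w$ of length $p$ makes $uwv$ allowable. A factor map is a continuous surjection commuting with the shifts; one-block means $\pi(x)_i$ depends only on $x_i$. $M(X,\sigma_X)$ denotes invariant Borel probability measures and $h$ entropy. *)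

theory Defs
  imports "HOL-Probability.Probability"
begin

text \<open>Points of one-sided shift spaces: sequences nat \<Rightarrow> nat with the product
  topology (the library's topology on function spaces; nat is discrete).\<close>

definition shift :: "(nat \<Rightarrow> nat) \<Rightarrow> (nat \<Rightarrow> nat)" where
  "shift x = (\<lambda>i. x (Suc i))"

definition full_shift :: "nat \<Rightarrow> (nat \<Rightarrow> nat) set" where
  "full_shift k = {x. \<forall>i. x i \<in> {1..k}}"

definition subshift :: "nat \<Rightarrow> (nat \<Rightarrow> nat) set \<Rightarrow> bool" where
  "subshift k X \<longleftrightarrow> X \<noteq> {} \<and> X \<subseteq> full_shift k \<and> closed X \<and> (\<forall>x\<in>X. shift x \<in> X)"

definition allowable :: "(nat \<Rightarrow> nat) set \<Rightarrow> nat list \<Rightarrow> bool" where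
  "allowable X w \<longleftrightarrow> (\<exists>x\<in>X. \<exists>i. w = map x [i..<i + length w])"

definition SFT :: "nat \<Rightarrow> (nat \<Rightarrow> nat) set \<Rightarrow> bool" where
  "SFT k X \<longleftrightarrow> subshift k X \<and>
     (\<exists>F. finite F \<and> X = {x \<in> full_shift k. \<forall>i n. map x [i..<i + n] \<notin> F})"

definition factor_map :: "(nat \<Rightarrow> nat) set \<Rightarrow> (nat \<Rightarrow> nat) set \<Rightarrow> ((nat \<Rightarrow> nat) \<Rightarrow> (nat \<Rightarrow> nat)) \<Rightarrow> bool" where
  "factor_map X Y \<pi> \<longleftrightarrow> continuous_on X \<pi> \<and> \<pi> ` X = Y \<and> (\<forall>x\<in>X. \<pi> (shift x) = shift (\<pi> x))"

definition one_block :: "(nat \<Rightarrow> nat) set \<Rightarrow> ((nat \<Rightarrow> nat) \<Rightarrow> (nat \<Rightarrow> nat)) \<Rightarrow> bool" where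
  "one_block X \<pi> \<longleftrightarrow> (\<exists>\<Phi>::nat \<Rightarrow> nat. \<forall>x\<in>X. \<pi> x = \<Phi> \<circ> x)"

definition sofic :: "nat \<Rightarrow> (nat \<Rightarrow> nat) set \<Rightarrow> bool" where
  "sofic k Y \<longleftrightarrow> subshift k Y \<and> (\<exists>k' Z \<phi>. SFT k' Z \<and> factor_map Z Y \<phi>)"

definition irreducible :: "(nat \<Rightarrow> nat) set \<Rightarrow> bool" where
  "irreducible X \<longleftrightarrow> (\<forall>u v. allowable X u \<longrightarrow> allowable X v \<longrightarrow> (\<exists>w. allowable X (u @ w @ v)))"

definition has_specification :: "(nat \<Rightarrow> nat) set \<Rightarrow> bool" where
  "has_specification X \<longleftrightarrow> (\<exists>p>0. \<forall>u v. allowable X u \<longrightarrow> allowable X v \<longrightarrow>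
      (\<exists>w. length w = p \<and> allowable X (u @ w @ v)))"

definition inv_measures :: "(nat \<Rightarrow> nat) set \<Rightarrow> (nat \<Rightarrow> nat) measure set" where
  "inv_measures X = {\<mu>. sets \<mu> = sets (restrict_space borel X) \<and> prob_space \<mu> \<and>
      distr \<mu> (restrict_space borel X) shift = \<mu>}"

definition pushfwd :: "(nat \<Rightarrow> nat) set \<Rightarrow> ((nat \<Rightarrow> nat) \<Rightarrow> (nat \<Rightarrow> nat)) \<Rightarrow> (nat \<Rightarrow> nat) measure \<Rightarrow> (nat \<Rightarrow> nat) measure" where
  "pushfwd Y \<pi> \<mu> = distr \<mu> (restrict_space borel Y) \<pi>"

definition part_entropy :: "'a measure \<Rightarrow> ('a \<Rightarrow> 'b) \<Rightarrow> real" where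
  "part_entropy \<mu> f = - (\<Sum>v\<in>f ` space \<mu>.
      measure \<mu> (f -` {v} \<inter> space \<mu>) * ln (measure \<mu> (f -` {v} \<inter> space \<mu>)))"

text \<open>Kolmogorov-Sinai entropy h_mu(T): supremum over finite measurable partitions P
  (level sets of f) of lim (1/n) H_mu(P v T^-1 P v ... v T^-(n-1) P).
  The n-fold join is the partition by the itinerary x \<mapsto> [f x, f (T x), ..., f (T^(n-1) x)].\<close>
definition ks_entropy :: "'a measure \<Rightarrow> ('a \<Rightarrow> 'a) \<Rightarrow> real" where
  "ks_entropy \<mu> T = (SUP f \<in> {f :: 'a \<Rightarrow> nat. f \<in> measurable \<mu> (count_space UNIV) \<and> finite (f ` space \<mu>)}.
      lim (\<lambda>n. part_entropy \<mu> (\<lambda>x. map (\<lambda>i. f ((T ^^ i) x)) [0..<n]) / real n))"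

end

theory Submission
  imports Defs
begin


lemma pe_cong:
  assumes "\<And>x. x \<in> space M \<Longrightarrow> u x = v x"
  shows "part_entropy M u = part_entropy M v"
proof -
  have "u ` space M = v ` space M" using assms by (auto simp: image_def)
  moreover have "\<And>a. u -` {a} \<inter> space M = v -` {a} \<inter> space M" using assms by auto
  ultimately show ?thesis unfolding part_entropy_def by simp
qed

lemma (in prob_space) pe_H:
  assumes "simple_function M u"
  shows "part_entropy M u = entropy (exp 1) (count_space (u ` space M)) u"
proof -
  interpret information_space M "exp 1" by standard simp
  show ?thesis
    using entropy_simple_distributed[OF simple_distributedI[OF assms measure_nonneg refl]]
    by (simp add: part_entropy_def log_def)
qed

lemma (in prob_space) pe_data:
  assumes "simple_function M u" "\<And>x. x \<in> space M \<Longrightarrow> v x = \<psi> (u x)"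
  shows "part_entropy M v \<le> part_entropy M u"
proof -
  interpret information_space M "exp 1" by standard simp
  have s: "simple_function M (\<psi> \<circ> u)" using assms(1) by auto
  have "part_entropy M v = part_entropy M (\<psi> \<circ> u)" using assms(2) by (intro pe_cong) auto
  also have "\<dots> = entropy (exp 1) (count_space ((\<psi> \<circ> u) ` space M)) (\<psi> \<circ> u)" by (rule pe_H[OF s])
  also have "\<dots> \<le> entropy (exp 1) (count_space (u ` space M)) u" by (rule entropy_data_processing[OF assms(1)])
  also have "\<dots> = part_entropy M u" using assms(1) by (simp add: pe_H)
  finally show ?thesis .
qed

lemma (in prob_space) pe_pair:
  assumes "simple_function M u" "simple_function M v"
  shows "part_entropy M (\<lambda>x. (u x, v x)) \<le> part_entropy M u + part_entropy M v"
proof -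
  interpret information_space M "exp 1" by standard simp
  have s: "simple_function M (\<lambda>x. (u x, v x))" using assms by auto
  have "part_entropy M (\<lambda>x. (u x, v x)) = entropy (exp 1) (count_space ((\<lambda>x. (u x, v x)) ` space M)) (\<lambda>x. (u x, v x))"
    by (rule pe_H[OF s])
  also have "\<dots> = entropy (exp 1) (count_space (u ` space M)) u + 
     conditional_entropy (exp 1) (count_space (v ` space M)) (count_space (u ` space M)) v u"
    by (rule entropy_chain_rule[OF assms])
  also have "\<dots> \<le> entropy (exp 1) (count_space (u ` space M)) u + entropy (exp 1) (count_space (v ` space M)) v"
    using conditional_entropy_less_eq_entropy[OF assms(2,1)] by simp
  finally show ?thesis using assms by (simp add: pe_H)
qed

lemma (in prob_space) pe_card:
  assumes "simple_function M u"
  shows "part_entropy M u \<le> ln (card (u ` space M))"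
proof -
  interpret information_space M "exp 1" by standard simp
  have "entropy (exp 1) (count_space (u ` space M)) u \<le> log (exp 1) (real (card (u ` space M)))"
    by (rule entropy_le_card[OF simple_distributedI[OF assms measure_nonneg refl]])
  then show ?thesis using assms by (simp add: pe_H log_def)
qed


lemma coord_borel: "(\<lambda>x::nat\<Rightarrow>nat. x i) \<in> measurable borel (count_space UNIV)"
proof -
  have "measurable (borel::(nat\<Rightarrow>nat) measure) (count_space UNIV) = measurable borel (borel::nat measure)"
    by (rule measurable_cong_sets[OF refl]) (simp add: sets_borel_eq_count_space)
  moreover have "(\<lambda>x::nat\<Rightarrow>nat. x i) \<in> measurable borel (borel::nat measure)" by measurable
  ultimately show ?thesis by simp
qed

lemma map_borel: "(\<lambda>x::nat\<Rightarrow>nat. map x [0..<N]) \<in> measurable borel (count_space UNIV)"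
proof (induction N)
  case 0 then show ?case by simp
next
  case (Suc N)
  have c: "(\<lambda>x::nat\<Rightarrow>nat. x N) \<in> measurable borel (count_space UNIV)" by (rule coord_borel)
  have "(\<lambda>x::nat\<Rightarrow>nat. map x [0..<Suc N]) = (\<lambda>x. (\<lambda>(a,b). a @ [b]) (map x [0..<N], x N))" by auto
  also have "\<dots> \<in> measurable borel (count_space UNIV)"
    using Suc c by measurable
  finally show ?case .
qed

lemma sets_borel_gen: "sets (borel :: (nat \<Rightarrow> nat) measure) = sigma_sets UNIV {{x. x i \<in> A} | i A. A \<in> sets (borel :: nat measure)}"
  unfolding sets_PiM_equal_borel[symmetric] sets_PiM_single
  by (simp add: space_borel)

lemma shift_borel: "shift \<in> measurable borel borel"
proof -
  have "continuous_on UNIV shift"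
    unfolding shift_def
    by (intro continuous_on_coordinatewise_then_product) (auto intro: continuous_on_product_coordinates)
  then show ?thesis by (rule borel_measurable_continuous_onI)
qed

lemma shift_pow: "(shift ^^ i) x = (\<lambda>j. x (i + j))"
  by (induction i arbitrary: x) (auto simp: shift_def)

lemma map_shift_pow: "map ((shift ^^ i) x) [0..<N] = map x [i..<i+N]"
  by (induction N) (simp_all add: shift_pow)

definition cyl :: "nat \<Rightarrow> nat list set \<Rightarrow> (nat \<Rightarrow> nat) set" where
  "cyl N S = {x. map x [0..<N] \<in> S}"

lemma cyl_borel: "cyl N S \<in> sets borel"
proof -
  have "(\<lambda>x::nat\<Rightarrow>nat. map x [0..<N]) -` S \<inter> space borel \<in> sets borel"
    using map_borel by (rule measurable_sets) simp
  then show ?thesis by (simp add: cyl_def vimage_def space_borel)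
qed

lemma map_take_upt: "N' \<le> N \<Longrightarrow> map x [0..<N'] = take N' (map x [0..<N])"
  by (simp add: take_map)

locale shiftsys = prob_space m for m :: "(nat\<Rightarrow>nat) measure" +
  fixes X :: "(nat\<Rightarrow>nat) set" and k :: nat
  assumes setsm: "sets m = sets (restrict_space borel X)"
  and Xsub: "X \<subseteq> full_shift k"
  and Xinv: "\<And>x. x \<in> X \<Longrightarrow> shift x \<in> X"
  and distr_eq: "distr m (restrict_space borel X) shift = m"
begin

lemma space_m: "space m = X"
  using sets_eq_imp_space_eq[OF setsm] by (simp add: space_restrict_space space_borel)

lemma inX: "B \<in> sets borel \<Longrightarrow> X \<inter> B \<in> sets m"
  unfolding setsm sets_restrict_space by auto

lemma setsm_X: "A \<in> sets m \<Longrightarrow> \<exists>B \<in> sets borel. A = X \<inter> B"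
  unfolding setsm sets_restrict_space by auto

lemma meas_from_borel: "f \<in> measurable borel N \<Longrightarrow> f \<in> measurable m N"
proof -
  assume f: "f \<in> measurable borel N"
  have e: "measurable m N = measurable (restrict_space borel X) N" by (rule measurable_cong_sets[OF setsm refl])
  show ?thesis unfolding e by (rule measurable_restrict_space1[OF f])
qed

lemma shift_meas: "shift \<in> measurable m m"
proof -
  have 1: "shift \<in> measurable (restrict_space borel X) borel"
    by (rule measurable_restrict_space1[OF shift_borel])
  have 2: "shift \<in> space (restrict_space borel X) \<rightarrow> X"
    using Xinv by (auto simp: space_restrict_space)
  have "shift \<in> measurable (restrict_space borel X) (restrict_space borel X)"
    by (rule measurable_restrict_space2[OF 2 1])
  moreover have e: "measurable m m = measurable (restrict_space borel X) (restrict_space borel X)"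
    by (rule measurable_cong_sets[OF setsm setsm])
  ultimately show ?thesis by simp
qed

lemma mp: "A \<in> sets m \<Longrightarrow> measure m (shift -` A \<inter> space m) = measure m A"
proof -
  assume A: "A \<in> sets m"
  have e: "measurable m m = measurable m (restrict_space borel X)" by (rule measurable_cong_sets[OF refl setsm])
  have sm: "shift \<in> measurable m (restrict_space borel X)"
    using shift_meas unfolding e .
  have "emeasure (distr m (restrict_space borel X) shift) A = emeasure m (shift -` A \<inter> space m)"
    by (rule emeasure_distr[OF sm]) (use A setsm in simp)
  then show ?thesis using distr_eq by (simp add: measure_def)
qed

lemma pow_meas: "(shift ^^ i) \<in> measurable m m"
proof (induction i)
  case (Suc i)
  show ?case using measurable_compose[OF Suc shift_meas] by (simp add: comp_def)
qed simp

lemma pe_inv: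
  assumes u: "simple_function m u"
  shows "part_entropy m (u \<circ> shift) = part_entropy m u"
proof -
  let ?V = "u ` space m" and ?V' = "(u \<circ> shift) ` space m"
  have sub: "?V' \<subseteq> ?V" using measurable_space[OF shift_meas] by auto
  have pre: "(u \<circ> shift) -` {v} \<inter> space m = shift -` (u -` {v} \<inter> space m) \<inter> space m" for v
    using measurable_space[OF shift_meas] by auto
  have meas: "u -` {v} \<inter> space m \<in> sets m" for v using simple_functionD(2)[OF u] .
  have eqm: "measure m ((u \<circ> shift) -` {v} \<inter> space m) = measure m (u -` {v} \<inter> space m)" for v
    unfolding pre by (rule mp[OF meas])
  have zero: "measure m (u -` {v} \<inter> space m) = 0" if "v \<in> ?V - ?V'" for v
  proof -
    have "(u \<circ> shift) -` {v} \<inter> space m = {}" using that by blast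
    then show ?thesis using eqm[of v] by simp
  qed
  have "(\<Sum>v\<in>?V'. measure m ((u \<circ> shift) -` {v} \<inter> space m) * ln (measure m ((u \<circ> shift) -` {v} \<inter> space m)))
      = (\<Sum>v\<in>?V'. measure m (u -` {v} \<inter> space m) * ln (measure m (u -` {v} \<inter> space m)))"
    by (simp add: eqm)
  also have "\<dots> = (\<Sum>v\<in>?V. measure m (u -` {v} \<inter> space m) * ln (measure m (u -` {v} \<inter> space m)))"
    apply (rule sum.mono_neutral_left)
    using simple_functionD(1)[OF u] sub zero by auto
  finally show ?thesis unfolding part_entropy_def by simp
qed

lemma simple_comp_pow: "simple_function m u \<Longrightarrow> simple_function m (u \<circ> (shift ^^ i))"
proof -
  assume u: "simple_function m u"
  have sub: "(u \<circ> (shift ^^ i)) ` space m \<subseteq> u ` space m"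
    using measurable_space[OF pow_meas[of i]] by auto
  have "finite ((u \<circ> (shift ^^ i)) ` space m)"
    by (rule finite_subset[OF sub simple_functionD(1)[OF u]])
  moreover have "u \<circ> (shift ^^ i) \<in> measurable m (count_space UNIV)"
    using u unfolding simple_function_eq_measurable by (intro measurable_comp[OF pow_meas]) auto
  ultimately show ?thesis unfolding simple_function_eq_measurable by simp
qed

lemma pe_inv_pow:
  assumes u: "simple_function m u"
  shows "part_entropy m (u \<circ> (shift ^^ i)) = part_entropy m u"
  using u
proof (induction i arbitrary: u)
  case 0 then show ?case by simp
next
  case (Suc i)
  have e: "u \<circ> (shift ^^ Suc i) = (u \<circ> shift) \<circ> (shift ^^ i)" by (simp add: comp_assoc funpow_Suc_right)
  have s: "simple_function m (u \<circ> shift)" using simple_comp_pow[OF Suc.prems, of 1] by simp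
  have "part_entropy m ((u \<circ> shift) \<circ> (shift ^^ i)) = part_entropy m (u \<circ> shift)" by (rule Suc.IH[OF s])
  then show ?case unfolding e using pe_inv[OF Suc.prems] by (rule trans)
qed


lemma sd_meas: "B \<in> sets borel \<Longrightarrow> C \<in> sets borel \<Longrightarrow> {x\<in>X. (x \<in> B) \<noteq> (x \<in> C)} \<in> sets m"
proof -
  assume B: "B \<in> sets borel" and C: "C \<in> sets borel"
  have "{x\<in>X. (x \<in> B) \<noteq> (x \<in> C)} = X \<inter> ((B - C) \<union> (C - B))" by auto
  also have "\<dots> \<in> sets m" using B C by (intro inX) auto
  finally show ?thesis .
qed

lemma approx_borel:
  assumes "B \<in> sigma_sets UNIV {{x. x i \<in> A} | i A. A \<in> sets (borel :: nat measure)}"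
  shows "\<forall>e>0. \<exists>N S. measure m {x\<in>X. (x \<in> B) \<noteq> (x \<in> cyl N S)} < e"
  using assms
proof (induction rule: sigma_sets.induct)
  case (Basic a)
  then obtain i A where a: "a = {x. x i \<in> A}" by auto
  have "cyl (Suc i) {w. w ! i \<in> A} = a" by (auto simp: cyl_def a nth_map simp del: upt_Suc)
  then have eq: "{x\<in>X. (x \<in> a) \<noteq> (x \<in> cyl (Suc i) {w. w ! i \<in> A})} = {}" by auto
  show ?case
  proof (intro allI impI)
    fix e :: real assume "e > 0"
    then show "\<exists>N S. measure m {x\<in>X. (x \<in> a) \<noteq> (x \<in> cyl N S)} < e"
      by (intro exI[of _ "Suc i"] exI[of _ "{w. w ! i \<in> A}"]) (simp only: eq measure_empty)
  qed
next
  case Empty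
  have eq: "{x\<in>X. (x \<in> {}) \<noteq> (x \<in> cyl 0 {})} = {}" by (auto simp: cyl_def)
  show ?case
  proof (intro allI impI)
    fix e :: real assume "e > 0"
    then show "\<exists>N S. measure m {x\<in>X. (x \<in> {}) \<noteq> (x \<in> cyl N S)} < e"
      by (intro exI[of _ 0] exI[of _ "{}"]) (simp only: eq measure_empty)
  qed
next
  case (Compl a)
  show ?case
  proof (intro allI impI)
    fix e :: real assume e: "e > 0"
    obtain N S where NS: "measure m {x\<in>X. (x \<in> a) \<noteq> (x \<in> cyl N S)} < e"
      using Compl.IH e by blast
    have eq: "{x\<in>X. (x \<in> UNIV - a) \<noteq> (x \<in> cyl N (- S))} = {x\<in>X. (x \<in> a) \<noteq> (x \<in> cyl N S)}"
      unfolding cyl_def by blast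
    show "\<exists>N S. measure m {x\<in>X. (x \<in> UNIV - a) \<noteq> (x \<in> cyl N S)} < e"
      by (intro exI[of _ N] exI[of _ "- S"]) (simp only: eq NS)
  qed
next
  case (Union a)
  have ab: "a i \<in> sets borel" for i using Union.hyps sets_borel_gen by auto
  show ?case
  proof (intro allI impI)
    fix e :: real assume e: "e > 0"
    define U where "U n = X \<inter> (\<Union>i<n. a i)" for n
    define W where "W = X \<inter> (\<Union>i. a i)"
    have Um: "U n \<in> sets m" for n unfolding U_def using ab by (intro inX) auto
    have Wm: "W \<in> sets m" unfolding W_def using ab by (intro inX) auto
    have inc: "incseq U" unfolding U_def incseq_def
      by (auto, meson lessThan_iff order_less_le_trans)
    have UW: "(\<Union>n. U n) = W" unfolding U_def W_def by auto
    have "(\<lambda>n. measure m (U n)) \<longlonglongrightarrow> measure m (\<Union>n. U n)"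
      by (rule finite_Lim_measure_incseq) (use Um inc in auto)
    then have "(\<lambda>n. measure m (U n)) \<longlonglongrightarrow> measure m W" by (simp add: UW)
    from LIMSEQ_D[OF this, of "e/2"] e obtain n where n: "norm (measure m (U n) - measure m W) < e/2"
      by auto
    have UsubW: "U n \<subseteq> W" unfolding U_def W_def by auto
    have WU: "measure m (W - U n) < e/2"
      using n finite_measure_Diff[OF Wm Um UsubW] finite_measure_mono[OF UsubW Wm] by simp
    define e' where "e' = e / (2 * (real n + 1))"
    have e'pos: "e' > 0" unfolding e'_def using e by simp
    have "\<forall>i\<in>{..<n}. \<exists>NS. measure m {x\<in>X. (x \<in> a i) \<noteq> (x \<in> cyl (fst NS) (snd NS))} < e'"
      using Union.IH e'pos by fastforce
    then have "\<exists>NS. \<forall>i\<in>{..<n}. measure m {x\<in>X. (x \<in> a i) \<noteq> (x \<in> cyl (fst (NS i)) (snd (NS i)))} < e'"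
      by (rule bchoice)
    then obtain NS where NS0: "\<forall>i\<in>{..<n}. measure m {x\<in>X. (x \<in> a i) \<noteq> (x \<in> cyl (fst (NS i)) (snd (NS i)))} < e'"
      by blast
    have NS: "\<And>i. i < n \<Longrightarrow> measure m {x\<in>X. (x \<in> a i) \<noteq> (x \<in> cyl (fst (NS i)) (snd (NS i)))} < e'"
      using NS0 by simp
    define Nt where "Nt = (\<Sum>i<n. fst (NS i))"
    have Nle: "fst (NS i) \<le> Nt" if "i < n" for i
      unfolding Nt_def using that by (intro member_le_sum) auto
    define S' where "S' = {w. \<exists>i<n. take (fst (NS i)) w \<in> snd (NS i)}"
    have tk: "take (fst (NS i)) (map x [0..<Nt]) = map x [0..<fst (NS i)]" if "i < n" for i x
      by (rule map_take_upt[OF Nle[OF that], symmetric])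
    have cylU: "x \<in> cyl Nt S' \<longleftrightarrow> (\<exists>i<n. x \<in> cyl (fst (NS i)) (snd (NS i)))" for x
      unfolding cyl_def S'_def by (auto simp: tk)
    define E where "E i = {x\<in>X. (x \<in> a i) \<noteq> (x \<in> cyl (fst (NS i)) (snd (NS i)))}" for i
    have Em: "E i \<in> sets m" for i unfolding E_def by (rule sd_meas[OF ab cyl_borel])
    have sub: "{x\<in>X. (x \<in> (\<Union>i. a i)) \<noteq> (x \<in> cyl Nt S')} \<subseteq> (W - U n) \<union> (\<Union>i<n. E i)"
    proof
      fix x assume x: "x \<in> {x\<in>X. (x \<in> (\<Union>i. a i)) \<noteq> (x \<in> cyl Nt S')}"
      show "x \<in> (W - U n) \<union> (\<Union>i<n. E i)"
      proof (cases "x \<in> cyl Nt S'")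
        case True
        then obtain i where "i < n" "x \<in> cyl (fst (NS i)) (snd (NS i))" using cylU by auto
        then show ?thesis using x True unfolding E_def by auto
      next
        case False
        then have nc: "\<And>i. i < n \<Longrightarrow> x \<notin> cyl (fst (NS i)) (snd (NS i))" using cylU by auto
        show ?thesis using x False nc unfolding E_def W_def U_def by auto
      qed
    qed
    have "measure m {x\<in>X. (x \<in> (\<Union>i. a i)) \<noteq> (x \<in> cyl Nt S')} \<le> measure m ((W - U n) \<union> (\<Union>i<n. E i))"
      by (rule finite_measure_mono[OF sub]) (use Wm Um Em in auto)
    also have "\<dots> \<le> measure m (W - U n) + measure m (\<Union>i<n. E i)"
      by (rule measure_Un_le) (use Wm Um Em in auto)
    also have "measure m (\<Union>i<n. E i) \<le> (\<Sum>i<n. measure m (E i))"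
      by (rule finite_measure_subadditive_finite) (use Em in auto)
    also have "\<dots> \<le> (\<Sum>i<n. e')"
      by (rule sum_mono) (use NS in \<open>auto simp: E_def less_imp_le\<close>)
    also have "\<dots> = real n * e'" by simp
    also have "real n * e' < e / 2"
    proof -
      have "real n * e' = e / 2 * (real n / (real n + 1))" unfolding e'_def by (simp add: field_simps)
      also have "\<dots> < e / 2 * 1" using e by (intro mult_strict_left_mono) auto
      finally show ?thesis by simp
    qed
    finally have "measure m {x\<in>X. (x \<in> (\<Union>i. a i)) \<noteq> (x \<in> cyl Nt S')} < e"
      using WU by simp
    then show "\<exists>N S. measure m {x\<in>X. (x \<in> (\<Union>i. a i)) \<noteq> (x \<in> cyl N S)} < e" by blast
  qed
qed

lemma approx_set:
  assumes "A \<in> sets m" "e > 0"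
  shows "\<exists>N S. measure m {x\<in>X. (x \<in> A) \<noteq> (x \<in> cyl N S)} < e"
proof -
  obtain B where B: "B \<in> sets borel" "A = X \<inter> B" using setsm_X[OF assms(1)] by blast
  obtain N S where "measure m {x\<in>X. (x \<in> B) \<noteq> (x \<in> cyl N S)} < e"
    using approx_borel[of B] B(1) assms(2) sets_borel_gen by auto
  moreover have "{x\<in>X. (x \<in> B) \<noteq> (x \<in> cyl N S)} = {x\<in>X. (x \<in> A) \<noteq> (x \<in> cyl N S)}"
    using B(2) by auto
  ultimately show ?thesis by auto
qed


lemma approx_fun:
  assumes f: "simple_function m f" and d: "\<delta> > 0"
  shows "\<exists>N \<phi>. measure m {x\<in>X. f x \<noteq> \<phi> (map x [0..<N])} \<le> \<delta>"
proof -
  define V where "V = f ` X"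
  have finV: "finite V" using simple_functionD(1)[OF f] space_m V_def by simp
  have "V \<noteq> {}" using not_empty space_m V_def by auto
  then have cpos: "card V > 0" using finV card_gt_0_iff by blast
  define A where "A v = f -` {v} \<inter> X" for v
  have Am: "A v \<in> sets m" for v using simple_functionD(2)[OF f, of "{v}"] space_m A_def by simp
  define d' where "d' = \<delta> / card V"
  have d'pos: "d' > 0" using d cpos d'_def by simp
  have "\<forall>v\<in>V. \<exists>NS. measure m {x\<in>X. (x \<in> A v) \<noteq> (x \<in> cyl (fst NS) (snd NS))} < d'"
    using approx_set[OF Am d'pos] by fastforce
  then have "\<exists>NS. \<forall>v\<in>V. measure m {x\<in>X. (x \<in> A v) \<noteq> (x \<in> cyl (fst (NS v)) (snd (NS v)))} < d'"
    by (rule bchoice)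
  then obtain NS where NS: "\<forall>v\<in>V. measure m {x\<in>X. (x \<in> A v) \<noteq> (x \<in> cyl (fst (NS v)) (snd (NS v)))} < d'"
    by blast
  define Nt where "Nt = (\<Sum>v\<in>V. fst (NS v))"
  have Nle: "fst (NS v) \<le> Nt" if "v \<in> V" for v
    unfolding Nt_def using that finV by (intro member_le_sum) auto
  have tk: "take (fst (NS v)) (map x [0..<Nt]) = map x [0..<fst (NS v)]" if "v \<in> V" for v x
    by (rule map_take_upt[OF Nle[OF that], symmetric])
  define \<phi> where "\<phi> w = (if \<exists>v\<in>V. take (fst (NS v)) w \<in> snd (NS v)
      then (SOME v. v \<in> V \<and> take (fst (NS v)) w \<in> snd (NS v)) else undefined)" for w
  define E where "E v = {x\<in>X. (x \<in> A v) \<noteq> (x \<in> cyl (fst (NS v)) (snd (NS v)))}" for v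
  have Em: "E v \<in> sets m" for v
  proof -
    have "A v = X \<inter> (f -` {v} \<inter> X)" using A_def by auto
    obtain B where B: "B \<in> sets borel" "A v = X \<inter> B" using setsm_X[OF Am] by blast
    have "E v = {x\<in>X. (x \<in> B) \<noteq> (x \<in> cyl (fst (NS v)) (snd (NS v)))}" using B(2) E_def by auto
    then show ?thesis using sd_meas[OF B(1) cyl_borel] by simp
  qed
  have sub: "{x\<in>X. f x \<noteq> \<phi> (map x [0..<Nt])} \<subseteq> (\<Union>v\<in>V. E v)"
  proof
    fix x assume x: "x \<in> {x\<in>X. f x \<noteq> \<phi> (map x [0..<Nt])}"
    then have xX: "x \<in> X" and ne: "f x \<noteq> \<phi> (map x [0..<Nt])" by auto
    define v where "v = f x"
    have vV: "v \<in> V" using xX v_def V_def by auto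
    have xA: "x \<in> A v" using xX v_def A_def by auto
    show "x \<in> (\<Union>v\<in>V. E v)"
    proof (cases "x \<in> cyl (fst (NS v)) (snd (NS v))")
      case False
      then show ?thesis using vV xA xX E_def by auto
    next
      case True
      then have ex: "\<exists>v\<in>V. take (fst (NS v)) (map x [0..<Nt]) \<in> snd (NS v)"
        using vV tk[OF vV, of x] unfolding cyl_def by (metis mem_Collect_eq)
      define v' where "v' = (SOME v. v \<in> V \<and> take (fst (NS v)) (map x [0..<Nt]) \<in> snd (NS v))"
      have v': "v' \<in> V \<and> take (fst (NS v')) (map x [0..<Nt]) \<in> snd (NS v')"
        unfolding v'_def by (rule someI_ex) (use ex in blast)
      have "\<phi> (map x [0..<Nt]) = v'" using ex unfolding \<phi>_def v'_def by simp
      then have "v' \<noteq> f x" using ne by simp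
      then have "x \<notin> A v'" using A_def by auto
      moreover have "x \<in> cyl (fst (NS v')) (snd (NS v'))" using v' tk[of v' x] by (auto simp: cyl_def)
      ultimately show ?thesis using v' xX E_def by auto
    qed
  qed
  have "measure m {x\<in>X. f x \<noteq> \<phi> (map x [0..<Nt])} \<le> measure m (\<Union>v\<in>V. E v)"
    by (rule finite_measure_mono[OF sub]) (use Em finV in auto)
  also have "\<dots> \<le> (\<Sum>v\<in>V. measure m (E v))"
    by (rule finite_measure_subadditive_finite) (use Em finV in auto)
  also have "\<dots> \<le> (\<Sum>v\<in>V. d')"
    by (rule sum_mono) (use NS in \<open>auto simp: E_def less_imp_le\<close>)
  also have "\<dots> = \<delta>" using cpos by (simp add: d'_def)
  finally show ?thesis by blast
qed

end

lemma neg_xlnx_le1: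
  fixes p :: real assumes "0 \<le> p" "p \<le> 1" shows "- (p * ln p) \<le> 1"
proof (cases "p = 0")
  case False
  then have p: "p > 0" using assms by simp
  have l: "ln (1/p) = - ln p" using p by (simp add: ln_div)
  have "ln (1/p) \<le> 1/p - 1" using p by (intro ln_le_minus_one) simp
  then have "p * ln (1/p) \<le> p * (1/p - 1)" using p by (intro mult_left_mono) auto
  also have "\<dots> = 1 - p" using p by (simp add: field_simps)
  finally have "p * ln (1/p) \<le> 1 - p" .
  then show ?thesis using assms l by simp
qed simp

lemma neg_xlnx_nonneg:
  fixes p :: real assumes "0 \<le> p" "p \<le> 1" shows "0 \<le> - (p * ln p)"
proof (cases "p = 0")
  case False
  then have "ln p \<le> 0" using assms by simp
  then show ?thesis using assms by (simp add: mult_nonneg_nonpos)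
qed simp

lemma neg_xlnx_le_sqrt:
  fixes p :: real assumes "0 \<le> p" shows "- (p * ln p) \<le> 2 * sqrt p"
proof (cases "p = 0")
  case False
  then have p: "p > 0" using assms by simp
  define s where "s = sqrt p"
  have s: "s > 0" "s * s = p" using p s_def by (auto simp: real_sqrt_mult_self)
  have "ln (s * s) = ln s + ln s" using s(1) by (simp add: ln_mult)
  then have lp: "ln p = 2 * ln s" using s(2) by simp
  have l: "ln (1/s) = - ln s" using s by (simp add: ln_div)
  have "ln (1/s) \<le> 1/s - 1" using s by (intro ln_le_minus_one) simp
  then have "ln (1/s) \<le> 1/s" by simp
  then have "2 * (s * s) * ln (1/s) \<le> 2 * (s * s) * (1/s)" using s by (intro mult_left_mono) auto
  also have "\<dots> = 2 * s" using s by (simp add: field_simps)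
  also have "2 * (s * s) * ln (1/s) = - (p * ln p)" using s(2) lp l by simp
  finally show ?thesis using s_def by simp
qed simp

lemma simple_map:
  assumes "\<And>i. i < n \<Longrightarrow> simple_function M (u i)"
  shows "simple_function M (\<lambda>x. map (\<lambda>i. u i x) [0..<n])"
  using assms
proof (induction n)
  case 0 then show ?case by simp
next
  case (Suc n)
  have "simple_function M (\<lambda>x. (\<lambda>a b. a @ [b]) (map (\<lambda>i. u i x) [0..<n]) (u n x))"
    by (rule simple_function_compose2) (use Suc in auto)
  then show ?case by simp
qed

lemma (in prob_space) pe_map_le:
  assumes "\<And>i. i < n \<Longrightarrow> simple_function M (u i)"
  shows "part_entropy M (\<lambda>x. map (\<lambda>i. u i x) [0..<n]) \<le> (\<Sum>i<n. part_entropy M (u i))"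
  using assms
proof (induction n)
  case 0
  have "part_entropy M (\<lambda>x. map (\<lambda>i. u i x) [0..<0]) = part_entropy M (\<lambda>x. [] :: 'b list)" by simp
  also have "\<dots> \<le> part_entropy M (\<lambda>x. ())" by (rule pe_data[where \<psi> = "\<lambda>_. []"]) auto
  also have "\<dots> = 0"
  proof -
    have "(\<lambda>x. ()) ` space M = {()}" using not_empty by auto
    moreover have "(\<lambda>x. ()) -` {()} \<inter> space M = space M" by auto
    ultimately show ?thesis unfolding part_entropy_def by (simp add: prob_space)
  qed
  finally show ?case by simp
next
  case (Suc n)
  have s1: "simple_function M (\<lambda>x. map (\<lambda>i. u i x) [0..<n])" by (rule simple_map) (use Suc in auto)
  have s2: "simple_function M (u n)" using Suc by auto
  have "part_entropy M (\<lambda>x. map (\<lambda>i. u i x) [0..<Suc n])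
      \<le> part_entropy M (\<lambda>x. (map (\<lambda>i. u i x) [0..<n], u n x))"
    by (rule pe_data[where \<psi> = "\<lambda>(a, b). a @ [b]"]) (use s1 s2 in auto)
  also have "\<dots> \<le> part_entropy M (\<lambda>x. map (\<lambda>i. u i x) [0..<n]) + part_entropy M (u n)"
    using pe_pair[OF s1 s2] by simp
  also have "\<dots> \<le> (\<Sum>i<n. part_entropy M (u i)) + part_entropy M (u n)"
    using Suc by auto
  finally show ?case by simp
qed




context shiftsys begin

lemma k_pos: "k \<ge> 1"
proof -
  obtain x where "x \<in> X" using not_empty space_m by auto
  then have "x 0 \<in> {1..k}" using Xsub by (auto simp: full_shift_def)
  then show ?thesis by simp
qed

lemma coord_simple: "simple_function m (\<lambda>x. x i)"
proof -
  have "(\<lambda>x. x i) ` space m \<subseteq> {1..k}" using Xsub space_m by (auto simp: full_shift_def)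
  then have "finite ((\<lambda>x. x i) ` space m)" by (rule finite_subset) simp
  moreover have "(\<lambda>x. x i) \<in> measurable m (count_space UNIV)" by (rule meas_from_borel[OF coord_borel])
  ultimately show ?thesis unfolding simple_function_eq_measurable by simp
qed

lemma G_simple: "simple_function m (\<lambda>x. map x [0..<n])"
  using simple_map[of n m "\<lambda>i x. x i", OF coord_simple] by simp

lemma G_bound: "part_entropy m (\<lambda>x. map x [0..<n]) \<le> real n * ln k"
proof -
  have sub: "(\<lambda>x. map x [0..<n]) ` space m \<subseteq> {xs. set xs \<subseteq> {1..k} \<and> length xs = n}"
  proof
    fix w assume "w \<in> (\<lambda>x. map x [0..<n]) ` space m"
    then obtain x where x: "x \<in> X" "w = map x [0..<n]" using space_m by auto
    have "\<forall>i. x i \<in> {1..k}" using Xsub x(1) unfolding full_shift_def by blast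
    then show "w \<in> {xs. set xs \<subseteq> {1..k} \<and> length xs = n}" using x(2) by auto
  qed
  have "card ((\<lambda>x. map x [0..<n]) ` space m) \<le> card {xs. set xs \<subseteq> {1..k} \<and> length xs = n}"
    by (rule card_mono[OF _ sub]) (simp add: finite_lists_length_eq)
  also have "\<dots> = k ^ n" by (simp add: card_lists_length_eq)
  finally have c: "card ((\<lambda>x. map x [0..<n]) ` space m) \<le> k ^ n" .
  have ne: "(\<lambda>x. map x [0..<n]) ` space m \<noteq> {}" using not_empty by auto
  have fin: "finite ((\<lambda>x. map x [0..<n]) ` space m)" using simple_functionD(1)[OF G_simple] .
  have cpos: "card ((\<lambda>x. map x [0..<n]) ` space m) > 0" using ne fin card_gt_0_iff by blast
  have "part_entropy m (\<lambda>x. map x [0..<n]) \<le> ln (card ((\<lambda>x. map x [0..<n]) ` space m))"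
    by (rule pe_card[OF G_simple])
  also have "\<dots> \<le> ln (real (k ^ n))"
  proof -
    have r: "real (card ((\<lambda>x. map x [0..<n]) ` space m)) \<le> real (k ^ n)" using c by (simp only: of_nat_le_iff)
    have p1: "0 < real (card ((\<lambda>x. map x [0..<n]) ` space m))" using cpos by (simp only: of_nat_0_less_iff)
    have p2: "0 < real (k ^ n)" using p1 r by linarith
    show ?thesis using r p1 p2 by (simp only: ln_le_cancel_iff)
  qed
  also have "\<dots> = real n * ln k" using k_pos by (simp add: ln_realpow)
  finally show ?thesis .
qed

lemma itin_bound:
  assumes f: "simple_function m f"
  shows "\<exists>N. \<forall>n. part_entropy m (\<lambda>x. map (\<lambda>i. f ((shift ^^ i) x)) [0..<n]) \<le> real (n + N) * ln k + 2 * real n"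
proof -
  define V where "V = f ` space m"
  define c where "c = card V"
  have finV: "finite V" using simple_functionD(1)[OF f] V_def by simp
  have "V \<noteq> {}" using not_empty V_def by auto
  then have cpos: "c > 0" using finV unfolding c_def by (simp add: card_gt_0_iff)
  define \<delta> where "\<delta> = (1 / (2 * real c)) ^ 2"
  have dpos: "\<delta> > 0" using cpos by (simp add: \<delta>_def)
  obtain N \<phi> where bad: "measure m {x\<in>X. f x \<noteq> \<phi> (map x [0..<N])} \<le> \<delta>"
    using approx_fun[OF f dpos] by blast
  define r where "r x = \<phi> (map x [0..<N])" for x
  have rs: "simple_function m r" unfolding r_def by (rule simple_function_compose1[OF G_simple])
  define d where "d x = (if f x = r x then None else Some (f x))" for x
  have ds: "simple_function m d" unfolding d_def
    by (rule simple_function_compose2[OF f rs, where h = "\<lambda>a b. if a = b then None else Some a"])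
  define Bad where "Bad = {x\<in>X. f x \<noteq> r x}"
  have Badm: "Bad \<in> sets m"
  proof -
    have "Bad = (\<lambda>x. (f x, r x)) -` {q. fst q \<noteq> snd q} \<inter> space m" unfolding Bad_def using space_m by auto
    then show ?thesis using simple_functionD(2)[OF simple_function_Pair[OF f rs], of "{q. fst q \<noteq> snd q}"] by (simp only:)
  qed
  have Badle: "measure m Bad \<le> \<delta>" using bad unfolding Bad_def r_def .
  define p where "p v = measure m (d -` {v} \<inter> space m)" for v
  define g where "g v = - (p v * ln (p v))" for v
  have p01: "0 \<le> p v" "p v \<le> 1" for v unfolding p_def by (auto simp: measure_nonneg)
  have gnn: "0 \<le> g v" for v unfolding g_def using p01 by (rule neg_xlnx_nonneg)
  have pe_d: "part_entropy m d \<le> 2"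
  proof -
    define B where "B = insert None (Some ` V)"
    have finB: "finite B" using finV B_def by simp
    have subB: "d ` space m \<subseteq> B" unfolding B_def V_def d_def by auto
    have "part_entropy m d = (\<Sum>v\<in>d ` space m. g v)"
      unfolding part_entropy_def g_def p_def by (simp add: sum_negf)
    also have "\<dots> \<le> (\<Sum>v\<in>B. g v)" by (rule sum_mono2[OF finB subB]) (use gnn in auto)
    also have "\<dots> = g None + (\<Sum>v\<in>Some ` V. g v)" unfolding B_def using finV by (subst sum.insert) auto
    also have "(\<Sum>v\<in>Some ` V. g v) = (\<Sum>v\<in>V. g (Some v))" by (subst sum.reindex) auto
    also have "\<dots> \<le> (\<Sum>v\<in>V. 1 / real c)"
    proof (rule sum_mono)
      fix v assume "v \<in> V"
      have "d -` {Some v} \<inter> space m \<subseteq> Bad" unfolding Bad_def d_def using space_m by (auto split: if_splits)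
      then have "p (Some v) \<le> \<delta>" unfolding p_def using Badle finite_measure_mono[OF _ Badm] by (meson order_trans)
      then have "sqrt (p (Some v)) \<le> sqrt \<delta>" by (rule real_sqrt_le_mono)
      also have "sqrt \<delta> = 1 / (2 * real c)" unfolding \<delta>_def using cpos by (simp add: real_sqrt_abs)
      finally have "2 * sqrt (p (Some v)) \<le> 1 / real c" using cpos by (simp add: field_simps)
      moreover have "g (Some v) \<le> 2 * sqrt (p (Some v))" unfolding g_def by (rule neg_xlnx_le_sqrt[OF p01(1)])
      ultimately show "g (Some v) \<le> 1 / real c" by simp
    qed
    also have "\<dots> = 1" using cpos by (simp add: c_def)
    finally have "part_entropy m d \<le> g None + 1" by simp
    moreover have "g None \<le> 1" unfolding g_def using p01 by (rule neg_xlnx_le1)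
    ultimately show ?thesis by simp
  qed
  have dpow: "part_entropy m (\<lambda>x. d ((shift ^^ i) x)) = part_entropy m d" for i
    using pe_inv_pow[OF ds, of i] by (simp add: comp_def)
  have dpows: "simple_function m (\<lambda>x. d ((shift ^^ i) x))" for i
    using simple_comp_pow[OF ds, of i] by (simp add: comp_def)
  show ?thesis
  proof (intro exI allI)
    fix n
    define G where "G (x::nat\<Rightarrow>nat) = map x [0..<n+N]" for x
    define D where "D (x::nat\<Rightarrow>nat) = map (\<lambda>i. d ((shift ^^ i) x)) [0..<n]" for x
    have Gs: "simple_function m G" unfolding G_def by (rule G_simple)
    have Ds: "simple_function m D" unfolding D_def by (rule simple_map) (rule dpows)
    define \<Psi> where "\<Psi> = (\<lambda>(gg :: nat list, ds). map (\<lambda>i. case ds ! i of None \<Rightarrow> \<phi> (take N (drop i gg)) | Some v \<Rightarrow> v) [0..<n])"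
    have FPsi: "map (\<lambda>i. f ((shift ^^ i) x)) [0..<n] = \<Psi> (G x, D x)" if "x \<in> space m" for x
      unfolding \<Psi>_def prod.case
    proof (rule map_cong[OF refl])
      fix i assume "i \<in> set [0..<n]"
      then have i: "i < n" by simp
      have tk: "take N (drop i (G x)) = map ((shift ^^ i) x) [0..<N]"
        unfolding G_def map_shift_pow using i by (simp add: drop_map take_map)
      have Di: "D x ! i = d ((shift ^^ i) x)" unfolding D_def using i by simp
      show "f ((shift ^^ i) x) = (case D x ! i of None \<Rightarrow> \<phi> (take N (drop i (G x))) | Some v \<Rightarrow> v)"
        unfolding Di tk by (simp add: d_def r_def split: if_splits)
    qed
    have "part_entropy m (\<lambda>x. map (\<lambda>i. f ((shift ^^ i) x)) [0..<n]) \<le> part_entropy m (\<lambda>x. (G x, D x))"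
      by (rule pe_data[where \<psi> = \<Psi>]) (use Gs Ds FPsi in auto)
    also have "\<dots> \<le> part_entropy m G + part_entropy m D" by (rule pe_pair[OF Gs Ds])
    also have "part_entropy m G \<le> real (n + N) * ln k" unfolding G_def by (rule G_bound)
    also have "part_entropy m D \<le> (\<Sum>i<n. part_entropy m (\<lambda>x. d ((shift ^^ i) x)))"
      unfolding D_def by (rule pe_map_le) (rule dpows)
    also have "\<dots> = real n * part_entropy m d" by (simp add: dpow)
    also have "\<dots> \<le> real n * 2" by (rule mult_left_mono[OF pe_d]) simp
    finally show "part_entropy m (\<lambda>x. map (\<lambda>i. f ((shift ^^ i) x)) [0..<n]) \<le> real (n + N) * ln k + 2 * real n"
      by simp
  qed
qed


lemma ks_bound: "ks_entropy m shift \<le> max (THE L::real. False) (ln k + 2)"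
proof -
  define B where "B = max (THE L::real. False) (ln k + 2)"
  let ?F = "{f :: (nat\<Rightarrow>nat) \<Rightarrow> nat. f \<in> measurable m (count_space UNIV) \<and> finite (f ` space m)}"
  have ne: "?F \<noteq> {}"
  proof -
    have "(\<lambda>_. 0::nat) \<in> ?F" by (auto intro: finite_subset[of _ "{0}"])
    then show ?thesis by blast
  qed
  have each: "lim (\<lambda>n. part_entropy m (\<lambda>x. map (\<lambda>i. f ((shift ^^ i) x)) [0..<n]) / real n) \<le> B"
    if fF: "f \<in> ?F" for f
  proof -
    have f: "simple_function m f" using fF unfolding simple_function_eq_measurable by simp
    obtain N where N: "\<And>n. part_entropy m (\<lambda>x. map (\<lambda>i. f ((shift ^^ i) x)) [0..<n]) \<le> real (n + N) * ln k + 2 * real n"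
      using itin_bound[OF f] by blast
    define a where "a n = part_entropy m (\<lambda>x. map (\<lambda>i. f ((shift ^^ i) x)) [0..<n]) / real n" for n
    show ?thesis
    proof (cases "convergent a")
      case True
      then obtain L where L: "a \<longlonglongrightarrow> L" by (auto simp: convergent_def)
      have b: "(\<lambda>n. (ln k + 2) + (real N * ln k) / real n) \<longlonglongrightarrow> (ln k + 2) + 0"
        by (rule tendsto_add[OF tendsto_const lim_const_over_n])
      have le: "a n \<le> (ln k + 2) + (real N * ln k) / real n" if "n \<ge> 1" for n
      proof -
        have np: "real n > 0" using that by simp
        have "a n \<le> (real (n + N) * ln k + 2 * real n) / real n"
          unfolding a_def by (rule divide_right_mono[OF N]) simp
        also have "\<dots> = (ln k + 2) + (real N * ln k) / real n" using np by (simp add: field_simps)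
        finally show ?thesis .
      qed
      have "L \<le> (ln k + 2) + 0"
        by (rule LIMSEQ_le[OF L b]) (use le in auto)
      then show ?thesis using limI[OF L] unfolding a_def B_def by simp
    next
      case False
      then have "(\<lambda>L. a \<longlonglongrightarrow> L) = (\<lambda>L. False)" by (auto simp: convergent_def)
      then have "lim a = (THE L::real. False)" by (simp add: lim_def)
      then show ?thesis unfolding a_def B_def by simp
    qed
  qed
  show ?thesis unfolding ks_entropy_def B_def[symmetric] by (rule cSUP_least[OF ne each])
qed

end




theorem corollary4p7:
  fixes k l :: nat and X Y :: "(nat \<Rightarrow> nat) set"
    and \<pi> :: "(nat \<Rightarrow> nat) \<Rightarrow> (nat \<Rightarrow> nat)" and \<mu> :: "(nat \<Rightarrow> nat) measure"
  assumes "sofic k X" and "irreducible X"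
    and "sofic l Y" and "irreducible Y"
    and "factor_map X Y \<pi>" and "one_block X \<pi>"
    and "has_specification X"
    and "\<mu> \<in> inv_measures X"
    and "ks_entropy \<mu> shift = (SUP m \<in> inv_measures X. ks_entropy m shift)"
    and "\<forall>m \<in> inv_measures X. ks_entropy m shift = (SUP m' \<in> inv_measures X. ks_entropy m' shift) \<longrightarrow> m = \<mu>"
  shows "{m \<in> inv_measures X. pushfwd Y \<pi> m = pushfwd Y \<pi> \<mu> \<and>
            ks_entropy m shift = (SUP m' \<in> {m' \<in> inv_measures X. pushfwd Y \<pi> m' = pushfwd Y \<pi> \<mu>}. ks_entropy m' shift)}
         = {\<mu>}"
proof -
  have sub: "subshift k X" using assms(1) by (simp add: sofic_def)
  then have Xsub: "X \<subseteq> full_shift k" and Xinv: "\<And>x. x \<in> X \<Longrightarrow> shift x \<in> X"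
    by (auto simp: subshift_def)
  define B where "B = max (THE L::real. False) (ln k + 2)"
  have bound: "ks_entropy m shift \<le> B" if "m \<in> inv_measures X" for m
  proof -
    have m: "sets m = sets (restrict_space borel X)" "prob_space m" "distr m (restrict_space borel X) shift = m"
      using that by (auto simp: inv_measures_def)
    have "shiftsys m X k"
      by (rule shiftsys.intro[OF m(2)]) (rule shiftsys_axioms.intro[OF m(1) Xsub Xinv m(3)])
    then show ?thesis unfolding B_def by (rule shiftsys.ks_bound)
  qed
  let ?h = "\<lambda>m. ks_entropy m shift"
  define Fib where "Fib = {m' \<in> inv_measures X. pushfwd Y \<pi> m' = pushfwd Y \<pi> \<mu>}"
  have FibI: "Fib \<subseteq> inv_measures X" unfolding Fib_def by auto
  have muF: "\<mu> \<in> Fib" unfolding Fib_def using assms(8) by simp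
  have bddG: "bdd_above (?h ` inv_measures X)" by (rule bdd_aboveI2[where M=B]) (rule bound)
  have bddF: "bdd_above (?h ` Fib)" by (rule bdd_aboveI2[where M=B]) (use bound FibI in blast)
  have h1: "?h \<mu> \<le> (SUP m'\<in>Fib. ?h m')" by (rule cSUP_upper[OF muF bddF])
  have h2: "(SUP m'\<in>Fib. ?h m') \<le> (SUP m\<in>inv_measures X. ?h m)"
  proof (rule cSUP_least)
    show "Fib \<noteq> {}" using muF by auto
    fix m' assume "m' \<in> Fib"
    then show "?h m' \<le> (SUP m\<in>inv_measures X. ?h m)" using FibI by (intro cSUP_upper[OF _ bddG]) auto
  qed
  have S: "(SUP m'\<in>Fib. ?h m') = ?h \<mu>" using h1 h2 assms(9) by simp
  show ?thesis
  proof
    show "{m \<in> inv_measures X. pushfwd Y \<pi> m = pushfwd Y \<pi> \<mu> \<and>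
            ks_entropy m shift = (SUP m' \<in> {m' \<in> inv_measures X. pushfwd Y \<pi> m' = pushfwd Y \<pi> \<mu>}. ks_entropy m' shift)}
         \<subseteq> {\<mu>}"
    proof
      fix m assume "m \<in> {m \<in> inv_measures X. pushfwd Y \<pi> m = pushfwd Y \<pi> \<mu> \<and>
            ks_entropy m shift = (SUP m' \<in> {m' \<in> inv_measures X. pushfwd Y \<pi> m' = pushfwd Y \<pi> \<mu>}. ks_entropy m' shift)}"
      then have "m \<in> inv_measures X" "?h m = (SUP m'\<in>Fib. ?h m')" unfolding Fib_def by auto
      then show "m \<in> {\<mu>}" using S assms(9,10) by auto
    qed
  next
    show "{\<mu>} \<subseteq> {m \<in> inv_measures X. pushfwd Y \<pi> m = pushfwd Y \<pi> \<mu> \<and>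
            ks_entropy m shift = (SUP m' \<in> {m' \<in> inv_measures X. pushfwd Y \<pi> m' = pushfwd Y \<pi> \<mu>}. ks_entropy m' shift)}"
      using assms(8) S unfolding Fib_def by auto
  qed
qed


end
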